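(* Let $p\ge1$ and let $X=(X,d,\mu)$ be an infinitesimally doubling metric measure space which is $p$-thick quasiconvex with constant $C\ge1$. Then every $u\in N^{1,p}(X)$ whose minimal $p$-weak upper gradient satisfies $g_u\le1$ almost everywhere has a $C$-Lipschitz representative.
   Context: A metric measure space is a proper metric space with a Borel regular outer measure positive and finite on balls; infinitesimally doubling means $\limsup_{r\to0}\mu(B(x,2r))/\mu(B(x,r))<\infty$ for $\mu$-a.e. $x$. $\operatorname{Mod}_p\Gamma=\inf\int\rho^pd\mu$ over Borel $\rho\ge0$ with $\int_\gamma\rho\ge1$ for all $\gamma\in\Gamma$. $N^{1,p}(X)$ is the Newtonian Sobolev space; $g_u$ the minimal $p$-weak upper gradient. For $E,F\subset X$ and $C\ge1$, $\Gamma(E,F;C)$ is the family of curves $\gamma:[0,1]\to X$ with $\gamma(0)\in E$, $\gamma(1)\in F$ and $\ell(\gamma)\le Cd(\gamma(0),\gamma(1))$. $X$ is $p$-thick quasiconvex with constant $C$ if $\operatorname{Mod}_p\Gamma(E,F;C)>0$ for all measurable $E,F$ of positive measure. *)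

theory Defs
  imports "HOL-Analysis.Analysis"
begin

text \<open>A metric measure space: the metric space is the type 'a (proper: closed balls are
compact), and M is a Borel measure on it (the Borel restriction of the Borel regular outer
measure; measurability w.r.t. the outer measure is represented via completion M) which is
positive and finite on balls.\<close>
definition mm_space :: "'a::metric_space measure \<Rightarrow> bool" where
  "mm_space M \<longleftrightarrow> (\<forall>(x::'a) r. compact (cball x r)) \<and> sets M = sets borel \<and>
     (\<forall>x r. 0 < r \<longrightarrow> 0 < emeasure M (ball x r) \<and> emeasure M (ball x r) < \<infinity>)"

definition infinitesimally_doubling :: "'a::metric_space measure \<Rightarrow> bool" where
  "infinitesimally_doubling M \<longleftrightarrow>
     (AE x in M. Limsup (at_right 0)
        (\<lambda>r::real. ereal (measure M (ball x (2 * r)) / measure M (ball x r))) < \<infinity>)"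

definition curve_length :: "(real \<Rightarrow> 'a::metric_space) \<Rightarrow> real \<Rightarrow> real \<Rightarrow> ennreal" where
  "curve_length g a b = (SUP ts \<in> {ts. sorted ts \<and> set ts \<subseteq> {a..b}}.
      (\<Sum>i < length ts - 1. ennreal (dist (g (ts ! i)) (g (ts ! Suc i)))))"

definition is_curve :: "(real \<Rightarrow> 'a::metric_space) \<Rightarrow> bool" where
  "is_curve g \<longleftrightarrow> continuous_on {0..1} g"

definition rectifiable_curve :: "(real \<Rightarrow> 'a::metric_space) \<Rightarrow> bool" where
  "rectifiable_curve g \<longleftrightarrow> is_curve g \<and> curve_length g 0 1 < \<infinity>"

definition ell :: "(real \<Rightarrow> 'a::metric_space) \<Rightarrow> real" where
  "ell g = enn2real (curve_length g 0 1)"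

definition arclength_param :: "(real \<Rightarrow> 'a::metric_space) \<Rightarrow> real \<Rightarrow> 'a" where
  "arclength_param g s = g (SOME t. t \<in> {0..1} \<and> enn2real (curve_length g 0 t) = s)"

definition line_integral :: "(real \<Rightarrow> 'a::metric_space) \<Rightarrow> ('a \<Rightarrow> ennreal) \<Rightarrow> ennreal" where
  "line_integral g \<rho> = (\<integral>\<^sup>+ s. indicator {0..ell g} s * \<rho> (arclength_param g s) \<partial>lborel)"

definition ennpow :: "ennreal \<Rightarrow> real \<Rightarrow> ennreal" where
  "ennpow x p = (if x = top then top else ennreal (enn2real x powr p))"

definition Mod :: "'a::metric_space measure \<Rightarrow> real \<Rightarrow> (real \<Rightarrow> 'a) set \<Rightarrow> ennreal" where
  "Mod M p \<Gamma> = (INF \<rho> \<in> {\<rho>. \<rho> \<in> borel_measurable borel \<and> (\<forall>g\<in>\<Gamma>. 1 \<le> line_integral g \<rho>)}.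
       \<integral>\<^sup>+ x. ennpow (\<rho> x) p \<partial>M)"

definition curve_family :: "'a::metric_space set \<Rightarrow> 'a set \<Rightarrow> real \<Rightarrow> (real \<Rightarrow> 'a) set" where
  "curve_family E F C = {g. is_curve g \<and> g 0 \<in> E \<and> g 1 \<in> F \<and>
       curve_length g 0 1 \<le> ennreal (C * dist (g 0) (g 1))}"

definition thick_quasiconvex :: "'a::metric_space measure \<Rightarrow> real \<Rightarrow> real \<Rightarrow> bool" where
  "thick_quasiconvex M p C \<longleftrightarrow> 1 \<le> C \<and>
     (\<forall>E F. E \<in> sets (completion M) \<longrightarrow> F \<in> sets (completion M) \<longrightarrow>
        0 < emeasure (completion M) E \<longrightarrow> 0 < emeasure (completion M) F \<longrightarrow>
        0 < Mod M p (curve_family E F C))"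

definition weak_upper_gradient :: "'a::metric_space measure \<Rightarrow> real \<Rightarrow> ('a \<Rightarrow> real) \<Rightarrow> ('a \<Rightarrow> ennreal) \<Rightarrow> bool" where
  "weak_upper_gradient M p u g \<longleftrightarrow> g \<in> borel_measurable borel \<and>
     Mod M p {\<gamma>. rectifiable_curve \<gamma> \<and>
        \<not> (ennreal \<bar>u (\<gamma> 0) - u (\<gamma> 1)\<bar> \<le> line_integral \<gamma> g)} = 0"

definition Newtonian :: "'a::metric_space measure \<Rightarrow> real \<Rightarrow> ('a \<Rightarrow> real) set" where
  "Newtonian M p = {u. u \<in> borel_measurable (completion M) \<and>
      (\<integral>\<^sup>+ x. ennreal (\<bar>u x\<bar> powr p) \<partial>M) < \<infinity> \<and>
      (\<exists>g. weak_upper_gradient M p u g \<and> (\<integral>\<^sup>+ x. ennpow (g x) p \<partial>M) < \<infinity>)}"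

definition minimal_weak_upper_gradient :: "'a::metric_space measure \<Rightarrow> real \<Rightarrow> ('a \<Rightarrow> real) \<Rightarrow> ('a \<Rightarrow> ennreal) \<Rightarrow> bool" where
  "minimal_weak_upper_gradient M p u g \<longleftrightarrow>
     weak_upper_gradient M p u g \<and> (\<integral>\<^sup>+ x. ennpow (g x) p \<partial>M) < \<infinity> \<and>
     (\<forall>h. weak_upper_gradient M p u h \<and> (\<integral>\<^sup>+ x. ennpow (h x) p \<partial>M) < \<infinity>
          \<longrightarrow> (AE x in M. g x \<le> h x))"

end

theory Submission
  imports Defs
begin

lemma proper_dense:
  fixes x0 :: "'a::metric_space"
  assumes "\<forall>(x::'a) r. compact (cball x r)"
  obtains D :: "'a set" where "countable D" "\<And>x e. 0 < e \<Longrightarrow> \<exists>z\<in>D. dist x z < e"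
proof -
  have "\<forall>n::nat. \<forall>k::nat. \<exists>K. finite K \<and> K \<subseteq> cball x0 (real n) \<and> cball x0 (real n) \<subseteq> (\<Union>x\<in>K. ball x (1 / (Suc k)))"
    using seq_compact_imp_totally_bounded[OF compact_imp_seq_compact[OF assms[rule_format]]]
    by simp
  then obtain K where K: "\<And>n k. finite (K n k) \<and> cball x0 (real n) \<subseteq> (\<Union>x\<in>K n k. ball x (1 / (Suc k)))"
    by metis
  define D where "D = (\<Union>n k. K n k)"
  have "countable D" unfolding D_def
  proof (intro countable_UN)
    fix n k show "countable (K n k)" using K[of n k] by (simp add: countable_finite)
  qed auto
  moreover have "\<exists>z\<in>D. dist x z < e" if "0 < e" for x e
  proof -
    obtain n :: nat where n: "dist x0 x \<le> real n" using real_arch_simple by blast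
    obtain k :: nat where k: "1 / real (Suc k) < e" using \<open>0 < e\<close>
      by (metis nat_approx_posE)
    have "x \<in> cball x0 (real n)" using n by simp
    then obtain z where "z \<in> K n k" "x \<in> ball z (1 / Suc k)" using K by blast
    moreover have "dist x z < e" using \<open>x \<in> ball z (1 / Suc k)\<close> k by (simp add: dist_commute)
    ultimately show ?thesis unfolding D_def by blast
  qed
  ultimately show ?thesis using that by blast
qed

lemma inner_bound:
  fixes f h :: "real \<Rightarrow> ennreal" and I :: "real set"
  assumes I: "I \<in> sets borel"
    and fh: "\<And>s. f s \<le> indicator I s \<or> h s = top"
    and hsmall: "integral\<^sup>N lborel h < 1"
  shows "integral\<^sup>N lborel f \<le> integral\<^sup>N lborel (indicator I)"
  unfolding nn_integral_def[of lborel f]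
proof (rule SUP_least)
  fix \<phi> assume "\<phi> \<in> {g. simple_function lborel g \<and> g \<le> f}"
  then have sf: "simple_function lborel \<phi>" and le: "\<phi> \<le> f" by auto
  have phim: "\<phi> \<in> borel_measurable lborel" using sf by (rule borel_measurable_simple_function)
  define A where "A = {s. indicator I s < \<phi> s}"
  have Am: "A \<in> sets lborel" unfolding A_def using phim I by measurable
  have "\<And>s. s \<in> A \<Longrightarrow> h s = top"
  proof -
    fix s assume "s \<in> A"
    then have "indicator I s < f s" using le unfolding A_def le_fun_def
      using order_less_le_trans by blast
    then show "h s = top" using fh[of s] by auto
  qed
  then have "\<And>s. top * indicator A s \<le> h s" by (auto simp: indicator_def)
  then have "integral\<^sup>N lborel (\<lambda>s. top * indicator A s) \<le> integral\<^sup>N lborel h"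
    by (rule nn_integral_mono)
  then have "top * emeasure lborel A < 1" using hsmall Am by (simp add: nn_integral_cmult_indicator)
  then have A0: "emeasure lborel A = 0"
    by (metis ennreal_mult_eq_top_iff ennreal_top_neq_one linorder_not_less mult.commute mult_zero_left top_greatest top.extremum_uniqueI)
  have "AE s in lborel. s \<notin> A" using A0 Am by (simp add: AE_iff_measurable[OF _ refl])
  then have "AE s in lborel. \<phi> s \<le> indicator I s" by eventually_elim (auto simp: A_def)
  then have "integral\<^sup>N lborel \<phi> \<le> integral\<^sup>N lborel (indicator I)" by (rule nn_integral_mono_AE)
  then show "integral\<^sup>S lborel \<phi> \<le> integral\<^sup>N lborel (indicator I)"
    using nn_integral_eq_simple_integral[OF sf] by simp
qed

lemma line_integral_mono:
  assumes "\<And>x. f1 x \<le> f2 x"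
  shows "line_integral \<gamma> f1 \<le> line_integral \<gamma> f2"
  unfolding line_integral_def
  by (rule nn_integral_mono) (simp add: assms mult_left_mono)

lemma core:
  fixes M :: "'a::metric_space measure"
  assumes sets: "sets M = sets borel"
    and tq: "thick_quasiconvex M p C"
    and wug: "weak_upper_gradient M p u g"
    and g1: "AE x in M. g x \<le> 1"
    and E: "E \<in> sets (completion M)" "0 < emeasure (completion M) E"
    and F: "F \<in> sets (completion M)" "0 < emeasure (completion M) F"
  shows "\<exists>x\<in>E. \<exists>y\<in>F. \<bar>u x - u y\<bar> \<le> C * dist x y"
proof -
  define \<Gamma> where "\<Gamma> = curve_family E F C"
  define F1 where "F1 = {\<gamma>. rectifiable_curve \<gamma> \<and>
        \<not> (ennreal \<bar>u (\<gamma> 0) - u (\<gamma> 1)\<bar> \<le> line_integral \<gamma> g)}"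
  define \<rho>Z :: "'a \<Rightarrow> ennreal" where "\<rho>Z = (\<lambda>x. if 1 < g x then top else 0)"
  have C1: "1 \<le> C" using tq by (simp add: thick_quasiconvex_def)
  have ModG: "0 < Mod M p \<Gamma>" using tq E F unfolding thick_quasiconvex_def \<Gamma>_def by blast
  have ModF1: "Mod M p F1 = 0" using wug unfolding weak_upper_gradient_def F1_def by blast
  have gm: "g \<in> borel_measurable borel" using wug unfolding weak_upper_gradient_def by blast
  have \<rho>Zm: "\<rho>Z \<in> borel_measurable borel" unfolding \<rho>Z_def using gm by measurable
  have \<rho>Z0: "AE x in M. \<rho>Z x = 0" using g1 by eventually_elim (auto simp: \<rho>Z_def)
  have ex: "\<exists>\<gamma>\<in>\<Gamma>. \<gamma> \<notin> F1 \<and> line_integral \<gamma> \<rho>Z < 1"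
  proof (rule ccontr)
    assume "\<not> ?thesis"
    then have cov: "\<And>\<gamma>. \<gamma> \<in> \<Gamma> \<Longrightarrow> \<gamma> \<in> F1 \<or> 1 \<le> line_integral \<gamma> \<rho>Z" by (auto simp: not_less)
    have "Mod M p \<Gamma> \<le> Mod M p F1"
      unfolding Mod_def[of M p F1]
    proof (rule INF_greatest)
      fix \<rho> assume \<rho>: "\<rho> \<in> {\<rho>. \<rho> \<in> borel_measurable borel \<and> (\<forall>g\<in>F1. 1 \<le> line_integral g \<rho>)}"
      have adm: "(\<lambda>x. \<rho> x + \<rho>Z x) \<in> {\<rho>. \<rho> \<in> borel_measurable borel \<and> (\<forall>g\<in>\<Gamma>. 1 \<le> line_integral g \<rho>)}"
      proof safe
        show "(\<lambda>x. \<rho> x + \<rho>Z x) \<in> borel_measurable borel" using \<rho> \<rho>Zm by (auto intro: borel_measurable_add)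
      next
        fix \<gamma> assume "\<gamma> \<in> \<Gamma>"
        then consider "\<gamma> \<in> F1" | "1 \<le> line_integral \<gamma> \<rho>Z" using cov by blast
        then show "1 \<le> line_integral \<gamma> (\<lambda>x. \<rho> x + \<rho>Z x)"
        proof cases
          case 1
          then have "1 \<le> line_integral \<gamma> \<rho>" using \<rho> by blast
          also have "\<dots> \<le> line_integral \<gamma> (\<lambda>x. \<rho> x + \<rho>Z x)" by (rule line_integral_mono) simp
          finally show ?thesis .
        next
          case 2
          also have "line_integral \<gamma> \<rho>Z \<le> line_integral \<gamma> (\<lambda>x. \<rho> x + \<rho>Z x)" by (rule line_integral_mono) simp
          finally show ?thesis .
        qed
      qed
      have "Mod M p \<Gamma> \<le> (\<integral>\<^sup>+ x. ennpow (\<rho> x + \<rho>Z x) p \<partial>M)"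
        unfolding Mod_def using adm by (rule INF_lower)
      also have "\<dots> = (\<integral>\<^sup>+ x. ennpow (\<rho> x) p \<partial>M)"
        by (rule nn_integral_cong_AE) (use \<rho>Z0 in eventually_elim, simp)
      finally show "Mod M p \<Gamma> \<le> (\<integral>\<^sup>+ x. ennpow (\<rho> x) p \<partial>M)" .
    qed
    then show False using ModG ModF1 by simp
  qed
  then obtain \<gamma> where g\<Gamma>: "\<gamma> \<in> \<Gamma>" and nF1: "\<gamma> \<notin> F1" and small: "line_integral \<gamma> \<rho>Z < 1" by blast
  have clen: "curve_length \<gamma> 0 1 \<le> ennreal (C * dist (\<gamma> 0) (\<gamma> 1))" and g0: "\<gamma> 0 \<in> E" and g1': "\<gamma> 1 \<in> F"
    and cur: "is_curve \<gamma>"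
    using g\<Gamma> unfolding \<Gamma>_def curve_family_def by auto
  have fin: "curve_length \<gamma> 0 1 < top" using clen
    using ennreal_less_top order_le_less_trans by blast
  have rect: "rectifiable_curve \<gamma>" using cur fin by (simp add: rectifiable_curve_def)
  have "ennreal \<bar>u (\<gamma> 0) - u (\<gamma> 1)\<bar> \<le> line_integral \<gamma> g" using nF1 rect unfolding F1_def by blast
  also have "line_integral \<gamma> g \<le> ennreal (ell \<gamma>)"
  proof -
    have l0: "0 \<le> ell \<gamma>" by (simp add: ell_def)
    have "line_integral \<gamma> g \<le> integral\<^sup>N lborel (indicator {0..ell \<gamma>})"
      unfolding line_integral_def
    proof (rule inner_bound[where h = "\<lambda>s. indicator {0..ell \<gamma>} s * \<rho>Z (arclength_param \<gamma> s)"])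
      show "integral\<^sup>N lborel (\<lambda>s. indicator {0..ell \<gamma>} s * \<rho>Z (arclength_param \<gamma> s)) < 1"
        using small unfolding line_integral_def .
    next
      fix s
      show "indicator {0..ell \<gamma>} s * g (arclength_param \<gamma> s) \<le> indicator {0..ell \<gamma>} s \<or>
          indicator {0..ell \<gamma>} s * \<rho>Z (arclength_param \<gamma> s) = top"
        by (cases "s \<in> {0..ell \<gamma>}"; cases "1 < g (arclength_param \<gamma> s)") (auto simp: \<rho>Z_def not_less)
    qed simp
    also have "\<dots> = ennreal (ell \<gamma>)" using l0 by simp
    finally show ?thesis .
  qed
  also have "ennreal (ell \<gamma>) \<le> ennreal (C * dist (\<gamma> 0) (\<gamma> 1))"
  proof -
    have "ell \<gamma> \<le> C * dist (\<gamma> 0) (\<gamma> 1)"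
      unfolding ell_def using clen C1
      by (metis dual_order.trans enn2real_ennreal enn2real_mono ennreal_less_top mult_nonneg_nonneg zero_le_dist zero_le_one)
    then show ?thesis by (rule ennreal_leI)
  qed
  finally have "\<bar>u (\<gamma> 0) - u (\<gamma> 1)\<bar> \<le> C * dist (\<gamma> 0) (\<gamma> 1)"
    using C1 by (subst (asm) ennreal_le_iff) auto
  then show ?thesis using g0 g1' by blast
qed

theorem proposition3p2:
  fixes M :: "'a::metric_space measure" and p C :: real and u :: "'a \<Rightarrow> real"
  assumes "1 \<le> p"
    and "mm_space M"
    and "infinitesimally_doubling M"
    and "thick_quasiconvex M p C"
    and "u \<in> Newtonian M p"
    and "\<exists>g. minimal_weak_upper_gradient M p u g \<and> (AE x in M. g x \<le> 1)"
  shows "\<exists>v. C-lipschitz_on UNIV v \<and> (AE x in M. u x = v x)"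
proof -
  obtain g where wug: "weak_upper_gradient M p u g" and g1: "AE x in M. g x \<le> 1"
    using assms(6) unfolding minimal_weak_upper_gradient_def by blast
  have sets: "sets M = sets borel" and cpt: "\<forall>(x::'a) r. compact (cball x r)"
    and balls: "\<And>x r. 0 < r \<Longrightarrow> 0 < emeasure M (ball x r)"
    using assms(2) unfolding mm_space_def by auto
  have spM: "space M = UNIV" using sets_eq_imp_space_eq[OF sets] by simp
  have C1: "1 \<le> C" using assms(4) by (simp add: thick_quasiconvex_def)
  have um: "u \<in> borel_measurable (completion M)" using assms(5) by (simp add: Newtonian_def)
  obtain D :: "'a set" where D: "countable D" "\<And>x e. 0 < e \<Longrightarrow> \<exists>z\<in>D. dist x z < e"
    using proper_dense[OF cpt] by blast
  define T where "T = {(z,r,z',r',a,b). z \<in> D \<and> r \<in> \<rat> \<and> z' \<in> D \<and> r' \<in> \<rat> \<and> a \<in> \<rat> \<and> b \<in> \<rat>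
      \<and> C * (dist z z' + r + r') < b - a}"
  have cT: "countable T"
  proof (rule countable_subset)
    show "T \<subseteq> D \<times> \<rat> \<times> D \<times> \<rat> \<times> \<rat> \<times> \<rat>" unfolding T_def by auto
    show "countable (D \<times> (\<rat>::real set) \<times> D \<times> (\<rat>::real set) \<times> (\<rat>::real set) \<times> (\<rat>::real set))"
      using D(1) countable_rat[where 'a=real] by (intro countable_SIGMA) auto
  qed
  define EE where "EE = (\<lambda>(z::'a,r::real,z'::'a,r'::real,a::real,b::real). {x. b \<le> u x} \<inter> ball z r)"
  define FF where "FF = (\<lambda>(z::'a,r::real,z'::'a,r'::real,a::real,b::real). {x. u x \<le> a} \<inter> ball z' r')"
  define NN where "NN = (\<lambda>t. if emeasure (completion M) (EE t) = 0 then EE t else FF t)"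
  have NNnull: "NN t \<in> null_sets (completion M)" if "t \<in> T" for t
  proof -
    obtain z r z' r' a b where t: "t = (z,r,z',r',a,b)" by (cases t) auto
    have cond: "C * (dist z z' + r + r') < b - a" using that t T_def by auto
    have ballm: "\<And>c e. ball c e \<in> sets (completion M)" using sets by simp
    have lm1: "{x. b \<le> u x} \<in> sets (completion M)"
    proof -
      have "{x\<in>space (completion M). b \<le> u x} \<in> sets (completion M)" using um by measurable
      then show ?thesis using spM by simp
    qed
    have lm2: "{x. u x \<le> a} \<in> sets (completion M)"
    proof -
      have "{x\<in>space (completion M). u x \<le> a} \<in> sets (completion M)" using um by measurable
      then show ?thesis using spM by simp
    qed
    have Em: "EE t \<in> sets (completion M)" unfolding t EE_def using lm1 ballm by auto
    have Fm: "FF t \<in> sets (completion M)" unfolding t FF_def using lm2 ballm by auto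
    show ?thesis
    proof (cases "emeasure (completion M) (EE t) = 0")
      case True then show ?thesis using Em by (simp add: NN_def null_sets_def)
    next
      case False
      have "emeasure (completion M) (FF t) = 0"
      proof (rule ccontr)
        assume "emeasure (completion M) (FF t) \<noteq> 0"
        then obtain x y where x: "x \<in> EE t" and y: "y \<in> FF t" and le: "\<bar>u x - u y\<bar> \<le> C * dist x y"
          using core[OF sets assms(4) wug g1 Em _ Fm] False by (auto simp: zero_less_iff_neq_zero)
        have "dist x y \<le> dist z x + dist z z' + dist z' y"
          using dist_triangle[of x y z] dist_triangle[of z y z'] dist_commute[of x z] by linarith
        also have "\<dots> < r + dist z z' + r'" using x y unfolding t EE_def FF_def by auto
        finally have "C * dist x y \<le> C * (dist z z' + r + r')" using C1 by (intro mult_left_mono) auto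
        moreover have "b - a \<le> u x - u y" using x y unfolding t EE_def FF_def by auto
        ultimately show False using le cond by linarith
      qed
      then show ?thesis using Fm False by (simp add: NN_def null_sets_def)
    qed
  qed
  define N where "N = (\<Union>t\<in>T. NN t)"
  have Nnull: "N \<in> null_sets (completion M)" unfolding N_def using cT NNnull by (rule null_sets_UN')
  have key: "u x - u y \<le> C * dist x y" if xN: "x \<notin> N" and yN: "y \<notin> N" for x y
  proof (rule ccontr)
    assume neg: "\<not> u x - u y \<le> C * dist x y"
    define \<delta> where "\<delta> = u x - u y - C * dist x y"
    have d0: "0 < \<delta>" using neg by (simp add: \<delta>_def)
    define \<epsilon> where "\<epsilon> = \<delta> / (8 * C)"
    have e0: "0 < \<epsilon>" using d0 C1 by (simp add: \<epsilon>_def)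
    obtain a where a: "a \<in> \<rat>" "u y < a" "a < u y + \<delta>/4" using Rats_dense_in_real[of "u y" "u y + \<delta>/4"] d0 by auto
    obtain b where b: "b \<in> \<rat>" "u x - \<delta>/4 < b" "b < u x" using Rats_dense_in_real[of "u x - \<delta>/4" "u x"] d0 by auto
    obtain z where z: "z \<in> D" "dist x z < \<epsilon>" using D(2) e0 by blast
    obtain r where r: "r \<in> \<rat>" "dist x z < r" "r < \<epsilon>" using Rats_dense_in_real[of "dist x z" \<epsilon>] z by auto
    obtain z' where z': "z' \<in> D" "dist y z' < \<epsilon>" using D(2) e0 by blast
    obtain r' where r': "r' \<in> \<rat>" "dist y z' < r'" "r' < \<epsilon>" using Rats_dense_in_real[of "dist y z'" \<epsilon>] z' by auto
    have "dist z z' \<le> dist x z + dist x y + dist y z'"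
      using dist_triangle[of z z' x] dist_triangle[of x z' y] dist_commute[of z x] by linarith
    then have dz: "dist z z' + r + r' < dist x y + 4 * \<epsilon>" using z z' r r' by linarith
    have "C * (dist z z' + r + r') < C * (dist x y + 4 * \<epsilon>)" using C1 dz by (intro mult_strict_left_mono) auto
    also have "\<dots> = C * dist x y + \<delta> / 2" using C1 by (simp add: \<epsilon>_def field_simps)
    also have "\<dots> < b - a" using a(2,3) b(2,3) \<delta>_def by linarith
    finally have tT: "(z,r,z',r',a,b) \<in> T" unfolding T_def using z z' r r' a b by auto
    have "x \<in> EE (z,r,z',r',a,b)" using b r by (simp add: EE_def dist_commute)
    moreover have "y \<in> FF (z,r,z',r',a,b)" using a r' by (simp add: FF_def dist_commute)
    ultimately have "x \<in> NN (z,r,z',r',a,b) \<or> y \<in> NN (z,r,z',r',a,b)" by (simp add: NN_def)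
    then show False using xN yN tT unfolding N_def by blast
  qed
  have Lip: "\<bar>u x - u y\<bar> \<le> C * dist x y" if "x \<notin> N" "y \<notin> N" for x y
    using key[OF that] key[OF that(2,1)] by (simp add: dist_commute)
  define S where "S = - N"
  have AES: "AE x in M. x \<in> S"
  proof -
    have "AE x in completion M. x \<notin> N" using Nnull by (rule AE_not_in)
    then show ?thesis unfolding S_def by (simp add: AE_completion_iff)
  qed
  obtain x0 where x0: "x0 \<in> S"
  proof (rule ccontr)
    assume "\<not> thesis"
    then have "S = {}" using that by blast
    then have "AE x in M. False" using AES by simp
    then have "AE x in M. x \<notin> space M" by (rule eventually_mono) simp
    then have "space M \<in> null_sets M" by (simp add: AE_iff_null_sets)
    then have "emeasure M (space M) = 0" by auto
    moreover have "emeasure M (ball x0 1) \<le> emeasure M (space M)"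
      using sets spM by (intro emeasure_mono) auto
    ultimately show False using balls[of 1 x0] by simp
  qed
  define v where "v = (\<lambda>z. INF x\<in>S. u x + C * dist z x)"
  have bdd: "bdd_below ((\<lambda>x. u x + C * dist z x) ` S)" for z
  proof (rule bdd_belowI2)
    fix x assume "x \<in> S"
    then have "\<bar>u x - u x0\<bar> \<le> C * dist x x0" using Lip x0 by (simp add: S_def)
    moreover have "C * dist x x0 \<le> C * dist z x + C * dist z x0"
    proof -
      have "C * dist x x0 \<le> C * (dist z x + dist z x0)"
        using C1 dist_triangle3[of x x0 z] by (intro mult_left_mono) auto
      then show ?thesis by (simp add: distrib_left)
    qed
    ultimately show "u x0 - C * dist z x0 \<le> u x + C * dist z x" by linarith
  qed
  have vS: "v x = u x" if "x \<in> S" for x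
  proof (rule antisym)
    show "v x \<le> u x" unfolding v_def using cINF_lower[OF bdd that, of x] by simp
    show "u x \<le> v x" unfolding v_def
    proof (rule cINF_greatest)
      show "S \<noteq> {}" using that by blast
      fix y assume "y \<in> S"
      then have "\<bar>u x - u y\<bar> \<le> C * dist x y" using Lip that by (simp add: S_def)
      then show "u x \<le> u y + C * dist x y" by linarith
    qed
  qed
  have vle: "v z \<le> v w + C * dist z w" for z w
  proof -
    have "v z - C * dist z w \<le> v w" unfolding v_def
    proof (rule cINF_greatest)
      show "S \<noteq> {}" using x0 by blast
      fix x assume xS: "x \<in> S"
      have "(INF x\<in>S. u x + C * dist z x) \<le> u x + C * dist z x" using cINF_lower[OF bdd xS] .
      also have "C * dist z x \<le> C * dist w x + C * dist z w"
      proof -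
        have "C * dist z x \<le> C * (dist w x + dist z w)"
          using C1 dist_triangle[of z x w] by (intro mult_left_mono) auto
        then show ?thesis by (simp add: distrib_left)
      qed
      finally show "(INF x\<in>S. u x + C * dist z x) - C * dist z w \<le> u x + C * dist w x" by linarith
    qed
    then show ?thesis by linarith
  qed
  have "C-lipschitz_on UNIV v"
  proof (rule lipschitz_onI)
    fix z w :: 'a
    show "dist (v z) (v w) \<le> C * dist z w"
      using vle[of z w] vle[of w z] by (simp add: dist_real_def dist_commute abs_le_iff)
  next
    show "0 \<le> C" using C1 by simp
  qed
  moreover have "AE x in M. u x = v x" using AES by eventually_elim (simp add: vS)
  ultimately show ?thesis by blast
qed

end
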